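(* Let $q=(n^2+3n)/2$, $n<p<q$, $\delta>0$, $\Lambda>0$, and let $\mathcal{Y}=\{y^0,y^1,\dots,y^p\}\subset\mathbb{R}^n$ be a $\Lambda$-poised set in $\overline{B}(y^0,\delta)$ in the minimum Frobenius norm sense. Let $\mathbf{L}_s\in\mathbb{R}^{p\times n}$ be the matrix whose $i$-th row is $(y^i-y^0)^T$, $i=1,\dots,p$, and $\hat{\mathbf{L}}_s=\frac1\delta\mathbf{L}_s$. Then \[ \|\hat{\mathbf{L}}_s^{\dagger}\|\le\Lambda\sqrt{2(n+1)}\,(p+1), \] where $\hat{\mathbf{L}}_s^{\dagger}$ is the Moore--Penrose pseudo-inverse of $\hat{\mathbf{L}}_s$.
   Context: $\overline{B}(x,\delta)$ is the closed Euclidean ball; $\|\cdot\|$ is the Euclidean norm / induced matrix norm, $\|\cdot\|_\infty$ the max norm. Natural basis of quadratic polynomials: $\overline\phi_L(x)=(1,x_1,\dots,x_n)$ and $\overline\phi_Q(x)=(\tfrac12x_1^2,x_1x_2,\dots,x_1x_n,\tfrac12x_2^2,\dots,x_{n-1}x_n,\tfrac12x_n^2)$. For a list of functions $\phi=(\phi_0,\dots,\phi_r)$, $\mathbf{M}(\phi,\mathcal{Y})$ is the $(p+1)\times(r+1)$ matrix with $(i,k)$ entry $\phi_k(y^i)$. $\mathcal{Y}$ is poised in the minimum Frobenius norm sense if the matrix $\begin{bmatrix}\mathbf{M}(\overline\phi_Q,\mathcal{Y})\mathbf{M}(\overline\phi_Q,\mathcal{Y})^T & \mathbf{M}(\overline\phi_L,\mathcal{Y})\\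 \mathbf{M}(\overline\phi_L,\mathcal{Y})^T & 0\end{bmatrix}$ is nonsingular. A poised set $\mathcal{Y}$ is $\Lambda$-poised in $B\subseteq\mathbb{R}^n$ in the minimum Frobenius norm sense if for every $x\in B$ the solution $\lambda(x)\in\mathbb{R}^{p+1}$ of $\min\frac12\|\mathbf{M}(\overline\phi_Q,\mathcal{Y})^T\lambda-\overline\phi_Q(x)\|^2$ subject to $\mathbf{M}(\overline\phi_L,\mathcal{Y})^T\lambda=\overline\phi_L(x)$ satisfies $\|\lambda(x)\|_\infty\le\Lambda$. *)

theory Defs
  imports "Jordan_Normal_Form.Determinant"
begin

definition vnorm :: "real vec \<Rightarrow> real" where
  "vnorm v = sqrt (v \<bullet> v)"

definition vnorm_inf :: "real vec \<Rightarrow> real" where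
  "vnorm_inf v = Max {\<bar>v $ i\<bar> | i. i < dim_vec v}"

definition opnorm :: "real mat \<Rightarrow> real" where
  "opnorm A = Sup {vnorm (A *\<^sub>v x) | x. x \<in> carrier_vec (dim_col A) \<and> vnorm x \<le> 1}"

definition is_pinv :: "real mat \<Rightarrow> real mat \<Rightarrow> bool" where
  "is_pinv A X \<longleftrightarrow> X \<in> carrier_mat (dim_col A) (dim_row A) \<and>
     A * X * A = A \<and> X * A * X = X \<and>
     transpose_mat (A * X) = A * X \<and> transpose_mat (X * A) = X * A"

definition pinv :: "real mat \<Rightarrow> real mat" where
  "pinv A = (THE X. is_pinv A X)"

definition phiL :: "nat \<Rightarrow> real vec \<Rightarrow> real vec" where
  "phiL n x = vec (n + 1) (\<lambda>k. if k = 0 then 1 else x $ (k - 1))"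

text \<open>Natural basis: quadratic part
  (x_1^2/2, x_1 x_2, ..., x_1 x_n, x_2^2/2, ..., x_{n-1} x_n, x_n^2/2) (0-based indices here).\<close>
definition phiQ :: "nat \<Rightarrow> real vec \<Rightarrow> real vec" where
  "phiQ n x = vec_of_list (concat (map (\<lambda>i. map (\<lambda>j. if j = i then x $ i ^ 2 / 2 else x $ i * x $ j)
                                                   [i..<n]) [0..<n]))"

definition MQ :: "nat \<Rightarrow> nat \<Rightarrow> (nat \<Rightarrow> real vec) \<Rightarrow> real mat" where
  "MQ n p y = mat_of_rows (n * (n + 1) div 2) (map (\<lambda>i. phiQ n (y i)) [0..<p + 1])"

definition MLin :: "nat \<Rightarrow> nat \<Rightarrow> (nat \<Rightarrow> real vec) \<Rightarrow> real mat" where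
  "MLin n p y = mat_of_rows (n + 1) (map (\<lambda>i. phiL n (y i)) [0..<p + 1])"

definition mfn_poised :: "nat \<Rightarrow> nat \<Rightarrow> (nat \<Rightarrow> real vec) \<Rightarrow> bool" where
  "mfn_poised n p y \<longleftrightarrow>
     det (four_block_mat (MQ n p y * transpose_mat (MQ n p y)) (MLin n p y)
                         (transpose_mat (MLin n p y)) (0\<^sub>m (n + 1) (n + 1))) \<noteq> 0"

definition mfn_solution :: "nat \<Rightarrow> nat \<Rightarrow> (nat \<Rightarrow> real vec) \<Rightarrow> real vec \<Rightarrow> real vec \<Rightarrow> bool" where
  "mfn_solution n p y x lam \<longleftrightarrow>
     lam \<in> carrier_vec (p + 1) \<and> transpose_mat (MLin n p y) *\<^sub>v lam = phiL n x \<and>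
     (\<forall>mu \<in> carrier_vec (p + 1). transpose_mat (MLin n p y) *\<^sub>v mu = phiL n x \<longrightarrow>
        (vnorm (transpose_mat (MQ n p y) *\<^sub>v lam - phiQ n x))\<^sup>2 / 2
          \<le> (vnorm (transpose_mat (MQ n p y) *\<^sub>v mu - phiQ n x))\<^sup>2 / 2)"

definition mfn_Lambda_poised :: "nat \<Rightarrow> nat \<Rightarrow> (nat \<Rightarrow> real vec) \<Rightarrow> real \<Rightarrow> real vec set \<Rightarrow> bool" where
  "mfn_Lambda_poised n p y \<Lambda> B \<longleftrightarrow> mfn_poised n p y \<and>
     (\<forall>x \<in> B. \<forall>lam. mfn_solution n p y x lam \<longrightarrow> vnorm_inf lam \<le> \<Lambda>)"

definition cball_vec :: "nat \<Rightarrow> real vec \<Rightarrow> real \<Rightarrow> real vec set" where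
  "cball_vec n c r = {x \<in> carrier_vec n. vnorm (x - c) \<le> r}"

definition Ls :: "nat \<Rightarrow> nat \<Rightarrow> (nat \<Rightarrow> real vec) \<Rightarrow> real mat" where
  "Ls n p y = mat p n (\<lambda>(i, j). y (i + 1) $ j - y 0 $ j)"

end

theory Submission
  imports Defs "HOL-Analysis.L2_Norm"
begin


lemma sp_self: "(v::real vec) \<bullet> v = (\<Sum>i<dim_vec v. (v $ i)^2)"
  unfolding scalar_prod_def by (simp add: power2_eq_square lessThan_atLeast0)

lemma sp_self_ge0: "(v::real vec) \<bullet> v \<ge> 0"
  unfolding sp_self by (rule sum_nonneg) simp

lemma vnorm_ge0: "vnorm v \<ge> 0" unfolding vnorm_def using sp_self_ge0 by simp

lemma vnorm_sq: "(vnorm v)^2 = v \<bullet> v" unfolding vnorm_def using sp_self_ge0 by simp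

lemma vnorm_zero: assumes "vnorm (v::real vec) = 0" shows "v = 0\<^sub>v (dim_vec v)"
proof -
  have "(\<Sum>i<dim_vec v. (v $ i)^2) = 0" using assms unfolding vnorm_def sp_self by simp
  then have "\<forall>i\<in>{..<dim_vec v}. (v $ i)^2 = 0" by (subst (asm) sum_nonneg_eq_0_iff) auto
  then show ?thesis by (intro eq_vecI) auto
qed

lemma cauchy_schwarz: assumes "dim_vec (w::real vec) = dim_vec v"
  shows "v \<bullet> w \<le> vnorm v * vnorm w"
proof -
  have "v \<bullet> w = (\<Sum>i\<in>{0..<dim_vec v}. v $ i * w $ i)" unfolding scalar_prod_def using assms by simp
  also have "\<dots> \<le> (\<Sum>i\<in>{0..<dim_vec v}. \<bar>v $ i\<bar> * \<bar>w $ i\<bar>)"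
    by (intro sum_mono) (metis abs_ge_self abs_mult)
  also have "\<dots> \<le> L2_set (\<lambda>i. v $ i) {0..<dim_vec v} * L2_set (\<lambda>i. w $ i) {0..<dim_vec v}"
    by (rule L2_set_mult_ineq)
  also have "\<dots> = vnorm v * vnorm w"
    unfolding L2_set_def vnorm_def sp_self assms[symmetric] by (simp add: lessThan_atLeast0)
  finally show ?thesis .
qed

lemma vnorm_smult: "vnorm (t \<cdot>\<^sub>v (v::real vec)) = \<bar>t\<bar> * vnorm v"
proof -
  have "(t \<cdot>\<^sub>v v) \<bullet> (t \<cdot>\<^sub>v v) = t^2 * (v \<bullet> v)"
    unfolding sp_self by (simp add: sum_distrib_left power_mult_distrib)
  then show ?thesis unfolding vnorm_def by (simp add: real_sqrt_mult)
qed

lemma vnorm_bound: assumes "\<forall>i<dim_vec (v::real vec). \<bar>v $ i\<bar> \<le> L"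
  shows "vnorm v \<le> sqrt (dim_vec v) * L"
proof -
  have L: "L \<ge> 0 \<or> dim_vec v = 0" using assms abs_ge_zero order_trans by blast
  have "v \<bullet> v \<le> (\<Sum>i<dim_vec v. L^2)" unfolding sp_self
  proof (intro sum_mono)
    fix i assume "i \<in> {..<dim_vec v}"
    then have "\<bar>v $ i\<bar> \<le> L" using assms by auto
    then show "(v $ i)^2 \<le> L^2" by (metis abs_ge_zero power2_abs power_mono)
  qed
  then have "vnorm v \<le> sqrt (dim_vec v * L^2)" unfolding vnorm_def by simp
  then show ?thesis using L by (auto simp: real_sqrt_mult vnorm_def)
qed

lemma inv_exists: assumes A: "(A::real mat) \<in> carrier_mat n n" and d: "det A \<noteq> 0"
  shows "\<exists>B \<in> carrier_mat n n. A * B = 1\<^sub>m n \<and> B * A = 1\<^sub>m n"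
proof -
  from det_non_zero_imp_unit[OF A d, of "()"]
  obtain B where "B \<in> carrier_mat n n" "B * A = 1\<^sub>m n" "A * B = 1\<^sub>m n"
    unfolding Units_def ring_mat_def by auto
  then show ?thesis by blast
qed

lemma sq_expand: assumes r: "(r::real vec) \<in> carrier_vec m" and s: "s \<in> carrier_vec m" and rs: "s \<bullet> r = 0"
  shows "(vnorm r)^2 \<le> (vnorm (r + s))^2"
proof -
  have "(r + s) \<bullet> (r + s) = r \<bullet> r + s \<bullet> r + (r \<bullet> s + s \<bullet> s)"
    using r s by (simp add: add_scalar_prod_distrib[of _ m] scalar_prod_add_distrib[of _ m])
  also have "r \<bullet> s = s \<bullet> r" using comm_scalar_prod[OF r s] .
  finally have "(r + s) \<bullet> (r + s) = r \<bullet> r + s \<bullet> s" using rs by simp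
  then show ?thesis unfolding vnorm_sq using sp_self_ge0[of s] by simp
qed

lemma kkt:
  fixes Q L :: "real mat"
  assumes Q: "Q \<in> carrier_mat N m" and L: "L \<in> carrier_mat N k" and f: "f \<in> carrier_vec m"
    and g: "g \<in> carrier_vec k"
    and d: "det (four_block_mat (Q * transpose_mat Q) L (transpose_mat L) (0\<^sub>m k k)) \<noteq> 0"
  shows "\<exists>lam \<in> carrier_vec N. transpose_mat L *\<^sub>v lam = g \<and>
     (\<forall>mu \<in> carrier_vec N. transpose_mat L *\<^sub>v mu = g \<longrightarrow>
        (vnorm (transpose_mat Q *\<^sub>v lam - f))\<^sup>2 \<le> (vnorm (transpose_mat Q *\<^sub>v mu - f))\<^sup>2)"
proof -
  let ?K = "four_block_mat (Q * transpose_mat Q) L (transpose_mat L) (0\<^sub>m k k)"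
  have QQ: "Q * transpose_mat Q \<in> carrier_mat N N" using Q by simp
  have LT: "transpose_mat L \<in> carrier_mat k N" using L by simp
  have QT: "transpose_mat Q \<in> carrier_mat m N" using Q by simp
  have K: "?K \<in> carrier_mat (N + k) (N + k)" using four_block_carrier_mat[OF QQ, of "0\<^sub>m k k" k] by simp
  obtain B where B: "B \<in> carrier_mat (N + k) (N + k)" "?K * B = 1\<^sub>m (N + k)"
    using inv_exists[OF K d] by blast
  let ?b = "(Q *\<^sub>v f) @\<^sub>v g"
  have b: "?b \<in> carrier_vec (N + k)" using Q f g by auto
  define v where "v = B *\<^sub>v ?b"
  have v: "v \<in> carrier_vec (N + k)" using B b v_def by auto
  have Kv: "?K *\<^sub>v v = ?b"
    unfolding v_def using assoc_mult_mat_vec[OF K B(1) b, symmetric] B(2) b by simp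
  define a where "a = vec_first v N"
  define dd where "dd = vec_last v k"
  have a: "a \<in> carrier_vec N" and dd: "dd \<in> carrier_vec k" unfolding a_def dd_def by auto
  have vad: "v = a @\<^sub>v dd" unfolding a_def dd_def using v by simp
  have "(Q * transpose_mat Q *\<^sub>v a + L *\<^sub>v dd) @\<^sub>v (transpose_mat L *\<^sub>v a + 0\<^sub>m k k *\<^sub>v dd) = ?b"
    using Kv four_block_mat_mult_vec[OF QQ L LT zero_carrier_mat a dd] vad by simp
  then have e1: "Q * transpose_mat Q *\<^sub>v a + L *\<^sub>v dd = Q *\<^sub>v f"
    and e2: "transpose_mat L *\<^sub>v a + 0\<^sub>m k k *\<^sub>v dd = g"
    using append_vec_eq[of "Q * transpose_mat Q *\<^sub>v a + L *\<^sub>v dd" N "Q *\<^sub>v f"] QQ L Q a dd f by auto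
  have La: "transpose_mat L *\<^sub>v a = g" using e2 L a dd by (auto intro!: eq_vecI)
  show ?thesis
  proof (intro bexI[OF _ a] conjI La ballI impI)
    fix mu assume mu: "mu \<in> carrier_vec N" and Lmu: "transpose_mat L *\<^sub>v mu = g"
    define e where "e = mu - a"
    have e: "e \<in> carrier_vec N" using mu a e_def by simp
    have Le: "transpose_mat L *\<^sub>v e = 0\<^sub>v k"
      unfolding e_def using mult_minus_distrib_mat_vec[OF LT mu a] La Lmu g by simp
    define r where "r = transpose_mat Q *\<^sub>v a - f"
    define s where "s = transpose_mat Q *\<^sub>v e"
    have r: "r \<in> carrier_vec m" using r_def QT a f by simp
    have s: "s \<in> carrier_vec m" using s_def QT e by simp
    have rs: "transpose_mat Q *\<^sub>v mu - f = r + s"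
      unfolding r_def s_def e_def using QT mu a f by (intro eq_vecI) (auto simp: mult_mat_vec_def scalar_prod_minus_distrib[of _ N])
    have Qr: "Q *\<^sub>v r = - (L *\<^sub>v dd)"
    proof -
      have Qr1: "Q *\<^sub>v r = Q *\<^sub>v (transpose_mat Q *\<^sub>v a) - Q *\<^sub>v f"
        unfolding r_def using mult_minus_distrib_mat_vec[OF Q _ f] QT a by simp
      have e1': "Q *\<^sub>v (transpose_mat Q *\<^sub>v a) + L *\<^sub>v dd = Q *\<^sub>v f"
        using e1 Q QT a by simp
      have ix: "(Q *\<^sub>v (transpose_mat Q *\<^sub>v a)) $ i + (L *\<^sub>v dd) $ i = (Q *\<^sub>v f) $ i" if i: "i < N" for i
        using arg_cong[OF e1', of "\<lambda>v. v $ i"] i Q L by simp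
      show ?thesis unfolding Qr1 using Q L f dd ix by (intro eq_vecI) (auto simp: algebra_simps)
    qed
    have "s \<bullet> r = e \<bullet> (Q *\<^sub>v r)" unfolding s_def by (rule transpose_vec_mult_scalar[OF Q r e])
    also have "\<dots> = - (e \<bullet> (L *\<^sub>v dd))" unfolding Qr using e L dd by simp
    also have "e \<bullet> (L *\<^sub>v dd) = (transpose_mat L *\<^sub>v e) \<bullet> dd"
      by (rule transpose_vec_mult_scalar[OF L dd e, symmetric])
    also have "\<dots> = 0" unfolding Le using dd by simp
    finally have "s \<bullet> r = 0" by simp
    then show "(vnorm (transpose_mat Q *\<^sub>v a - f))\<^sup>2 \<le> (vnorm (transpose_mat Q *\<^sub>v mu - f))\<^sup>2"
      unfolding rs r_def[symmetric] using sq_expand[OF r s] by simp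
  qed
qed

lemma pinv_bound:
  fixes A :: "real mat"
  assumes A: "A \<in> carrier_mat p n" and c: "c \<ge> 0"
    and key: "\<forall>z \<in> carrier_vec n. vnorm z \<le> c * vnorm (A *\<^sub>v z)"
  shows "opnorm (pinv A) \<le> c"
proof -
  define G where "G = transpose_mat A * A"
  have AT: "transpose_mat A \<in> carrier_mat n p" using A by simp
  have G: "G \<in> carrier_mat n n" unfolding G_def using A by simp
  have dG: "det G \<noteq> 0"
  proof
    assume "det G = 0"
    then obtain v where v: "v \<in> carrier_vec n" "v \<noteq> 0\<^sub>v n" "G *\<^sub>v v = 0\<^sub>v n"
      using det_0_iff_vec_prod_zero_field[OF G] by blast
    have Av: "A *\<^sub>v v \<in> carrier_vec p" using A v by simp
    have "(A *\<^sub>v v) \<bullet> (A *\<^sub>v v) = (transpose_mat A *\<^sub>v (A *\<^sub>v v)) \<bullet> v"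
      by (rule transpose_vec_mult_scalar[OF A v(1) Av, symmetric])
    also have "transpose_mat A *\<^sub>v (A *\<^sub>v v) = G *\<^sub>v v" unfolding G_def using A AT v by simp
    also have "\<dots> \<bullet> v = 0" using v by simp
    finally have "vnorm (A *\<^sub>v v) = 0" unfolding vnorm_def by simp
    then have "vnorm v \<le> 0" using key v by auto
    then have "vnorm v = 0" using vnorm_ge0[of v] by linarith
    then have "v = 0\<^sub>v n" using vnorm_zero[of v] v by simp
    with v show False by simp
  qed
  obtain B where B: "B \<in> carrier_mat n n" "G * B = 1\<^sub>m n" "B * G = 1\<^sub>m n"
    using inv_exists[OF G dG] by blast
  have GT: "transpose_mat G = G" unfolding G_def using transpose_mult[OF AT A] by simp
  have BT: "transpose_mat B = B"
  proof -
    have "transpose_mat B * G = 1\<^sub>m n"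
      using arg_cong[OF B(2), of transpose_mat] transpose_mult[OF G B(1)] GT by simp
    then have "(transpose_mat B * G) * B = B" using B(1) left_mult_one_mat by metis
    moreover have "(transpose_mat B * G) * B = transpose_mat B * (G * B)" using B G by (simp add: assoc_mult_mat[of _ n n])
    ultimately show ?thesis using B right_mult_one_mat[of "transpose_mat B" n n] by simp
  qed
  define X where "X = B * transpose_mat A"
  have X: "X \<in> carrier_mat n p" unfolding X_def using B AT by simp
  have XA: "X * A = 1\<^sub>m n" unfolding X_def using B AT A
    by (simp add: assoc_mult_mat[of _ n n] G_def)
  have pX: "is_pinv A X"
    unfolding is_pinv_def
  proof (intro conjI)
    show "X \<in> carrier_mat (dim_col A) (dim_row A)" using X A by simp
    show "A * X * A = A" using A X XA by (simp add: assoc_mult_mat[of _ p n])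
    show "X * A * X = X" using XA X by simp
    show "transpose_mat (A * X) = A * X"
    proof -
      have "transpose_mat (A * X) = transpose_mat X * transpose_mat A" using transpose_mult[OF A X] .
      also have "transpose_mat X = A * transpose_mat B" unfolding X_def using transpose_mult[OF B(1) AT] by simp
      finally show ?thesis unfolding X_def BT using A B AT by (simp add: assoc_mult_mat[of _ p n])
    qed
    show "transpose_mat (X * A) = X * A" using XA by simp
  qed
  have uniq: "Y = X" if pY: "is_pinv A Y" for Y
  proof -
    have Y: "Y \<in> carrier_mat n p" and AYA: "A * Y * A = A" and sym: "transpose_mat (A * Y) = A * Y"
      using pY A unfolding is_pinv_def by auto
    have "transpose_mat A = transpose_mat (A * Y * A)" using AYA by simp
    also have "\<dots> = transpose_mat A * transpose_mat (A * Y)" using transpose_mult[of "A * Y" p p A n] A Y by simp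
    also have "\<dots> = transpose_mat A * (A * Y)" using sym by simp
    finally have e: "transpose_mat A = G * Y" unfolding G_def using A AT Y by (simp add: assoc_mult_mat[of _ n p])
    have "X = B * (G * Y)" unfolding X_def using e by simp
    also have "\<dots> = (B * G) * Y" using assoc_mult_mat[OF B(1) G Y] by simp
    also have "\<dots> = Y" using B(3) Y left_mult_one_mat by metis
    finally show ?thesis by simp
  qed
  have pinvX: "pinv A = X" unfolding pinv_def using pX uniq by (rule the_equality)
  define M where "M = A * X"
  have M: "M \<in> carrier_mat p p" unfolding M_def using A X by simp
  have MT: "transpose_mat M = M" unfolding M_def using pX is_pinv_def by auto
  have MM: "M * M = M"
  proof -
    have AXA: "A * X * A = A" using pX unfolding is_pinv_def by simp
    have "M * M = (A * X * A) * X" unfolding M_def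
      using assoc_mult_mat[of "A * X" p p A n X p] A X by simp
    then show ?thesis unfolding AXA M_def .
  qed
  have bnd: "vnorm (X *\<^sub>v w) \<le> c * vnorm w" if w: "w \<in> carrier_vec p" for w
  proof -
    have Mw: "M *\<^sub>v w \<in> carrier_vec p" using M w by simp
    have "(M *\<^sub>v w) \<bullet> (M *\<^sub>v w) = (transpose_mat M *\<^sub>v (M *\<^sub>v w)) \<bullet> w"
      by (rule transpose_vec_mult_scalar[OF M w Mw, symmetric])
    also have "transpose_mat M *\<^sub>v (M *\<^sub>v w) = M *\<^sub>v w"
      unfolding MT using assoc_mult_mat_vec[OF M M w, symmetric] MM by simp
    also have "(M *\<^sub>v w) \<bullet> w \<le> vnorm (M *\<^sub>v w) * vnorm w" using cauchy_schwarz M w by simp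
    finally have "(vnorm (M *\<^sub>v w))^2 \<le> vnorm (M *\<^sub>v w) * vnorm w" unfolding vnorm_sq .
    then have Mle: "vnorm (M *\<^sub>v w) \<le> vnorm w"
      using vnorm_ge0[of "M *\<^sub>v w"] vnorm_ge0[of w]
      by (metis mult_le_cancel_left_pos not_le order_le_less power2_eq_square)
    have Xw: "X *\<^sub>v w \<in> carrier_vec n" using X w by simp
    have "vnorm (X *\<^sub>v w) \<le> c * vnorm (A *\<^sub>v (X *\<^sub>v w))" using key Xw by blast
    also have "A *\<^sub>v (X *\<^sub>v w) = M *\<^sub>v w" unfolding M_def using A X w by simp
    also have "c * vnorm (M *\<^sub>v w) \<le> c * vnorm w" using Mle c by (rule mult_left_mono)
    finally show ?thesis .
  qed
  have "Sup {vnorm (X *\<^sub>v x) | x. x \<in> carrier_vec (dim_col X) \<and> vnorm x \<le> 1} \<le> c"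
  proof (rule cSup_least)
    show "{vnorm (X *\<^sub>v x) | x. x \<in> carrier_vec (dim_col X) \<and> vnorm x \<le> 1} \<noteq> {}"
    proof -
      have "vnorm (0\<^sub>v p) = 0" unfolding vnorm_def by simp
      then have "vnorm (X *\<^sub>v 0\<^sub>v p) \<in> {vnorm (X *\<^sub>v x) | x. x \<in> carrier_vec (dim_col X) \<and> vnorm x \<le> 1}"
        using X by fastforce
      then show ?thesis by blast
    qed
  next
    fix r assume "r \<in> {vnorm (X *\<^sub>v x) | x. x \<in> carrier_vec (dim_col X) \<and> vnorm x \<le> 1}"
    then obtain x where x: "x \<in> carrier_vec p" "vnorm x \<le> 1" "r = vnorm (X *\<^sub>v x)" using X by auto
    have "r \<le> c * vnorm x" using bnd x by simp
    also have "\<dots> \<le> c" using x c by (simp add: mult_left_le)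
    finally show "r \<le> c" .
  qed
  then show ?thesis unfolding opnorm_def pinvX .
qed

lemma sum_rev_gauss: "2 * (\<Sum>i<n. n - i) = n * (n + 1::nat)"
proof (induction n)
  case (Suc n)
  have "(\<Sum>i<Suc n. Suc n - i) = (\<Sum>i<n. Suc n - i) + 1" by simp
  also have "(\<Sum>i<n. Suc n - i) = (\<Sum>i<n. (n - i) + 1)" by (intro sum.cong) auto
  also have "\<dots> = (\<Sum>i<n. n - i) + n" by (subst sum.distrib) simp
  finally show ?case using Suc by simp
qed simp

lemma dim_phiQ: "dim_vec (phiQ n x) = n * (n + 1) div 2"
proof -
  have "dim_vec (phiQ n x) = sum_list (map (\<lambda>i. n - i) [0..<n])"
    unfolding phiQ_def by (simp add: length_concat comp_def)
  also have "\<dots> = (\<Sum>i<n. n - i)" by (simp add: sum_list_sum_nth lessThan_atLeast0)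
  finally show ?thesis using sum_rev_gauss[of n] by simp
qed

lemma MLin_col: assumes j: "j < n + 1" and lam: "lam \<in> carrier_vec (p + 1)"
  shows "(transpose_mat (MLin n p y) *\<^sub>v lam) $ j =
     (\<Sum>i<p+1. (if j = 0 then 1 else y i $ (j - 1)) * lam $ i)"
  using j lam unfolding MLin_def
  by (simp add: scalar_prod_def mat_of_rows_index phiL_def lessThan_atLeast0 mult.commute del: upt_Suc)


lemma LsT_idx: "k < n \<Longrightarrow> (transpose_mat (Ls n p y) *\<^sub>v vec p f) $ k = (\<Sum>i<p. (y (i+1) $ k - y 0 $ k) * f i)"
  unfolding Ls_def by (simp add: scalar_prod_def lessThan_atLeast0)

lemma sum_split_lin: "(\<Sum>i<p. ((a i::real) - b) * l i) = (\<Sum>i<p. a i * l i) - b * (\<Sum>i<p. l i)"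
proof -
  have "(\<Sum>i<p. (a i - b) * l i) = (\<Sum>i<p. a i * l i - b * l i)" by (intro sum.cong) (auto simp: algebra_simps)
  then show ?thesis by (simp add: sum_subtractf sum_distrib_left)
qed

lemma smult_mv: assumes A: "(A::real mat) \<in> carrier_mat r c" and z: "z \<in> carrier_vec c" and d: "d \<noteq> 0"
  shows "A *\<^sub>v z = d \<cdot>\<^sub>v (((1/d) \<cdot>\<^sub>m A) *\<^sub>v z)"
proof (rule eq_vecI)
  fix i assume "i < dim_vec (d \<cdot>\<^sub>v (((1/d) \<cdot>\<^sub>m A) *\<^sub>v z))"
  then have i: "i < r" using A by simp
  have "(((1/d) \<cdot>\<^sub>m A) *\<^sub>v z) $ i = (1/d) * (row A i \<bullet> z)"
    using i A z by (simp add: smult_scalar_prod_distrib[of _ c])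
  then show "(A *\<^sub>v z) $ i = (d \<cdot>\<^sub>v (((1/d) \<cdot>\<^sub>m A) *\<^sub>v z)) $ i" using i A d by simp
qed (use A in simp)

lemma fin_arith: assumes L: "(L::real) > 0"
  shows "sqrt (real p) * L \<le> L * sqrt (2 * (real n + 1)) * real (p + 1)"
proof -
  have sq: "(real p+1)^2 = real p * real p + 2*real p + 1" by (simp add: power2_eq_square algebra_simps)
  have "real p * real p \<ge> 0" by simp
  then have "real p \<le> (real p + 1)^2" using sq by linarith
  then have "sqrt p \<le> sqrt ((real p + 1)^2)" by (rule real_sqrt_le_mono)
  also have "\<dots> = real p + 1" by simp
  also have "\<dots> \<le> sqrt (2 * (real n + 1)) * (real p + 1)"
    using mult_right_mono[of 1 "sqrt (2 * (real n + 1))" "real p + 1"] by simp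
  finally have "sqrt p * L \<le> sqrt (2 * (real n + 1)) * (real p + 1) * L"
    using L by (simp add: mult_right_mono)
  then show ?thesis by (simp add: algebra_simps)
qed

lemma f: "phiQ n x \<in> carrier_vec (n * (n + 1) div 2)" using dim_phiQ[of n x] unfolding carrier_vec_def by simp
lemma g: "phiL n x \<in> carrier_vec (n + 1)" unfolding phiL_def by simp
lemma MQc: "MQ n p y \<in> carrier_mat (p + 1) (n * (n + 1) div 2)" unfolding MQ_def
    using mat_of_rows_carrier(1)[of "n * (n + 1) div 2" "map (\<lambda>i. phiQ n (y i)) [0..<p + 1]"] by simp
lemma MLc: "MLin n p y \<in> carrier_mat (p + 1) (n + 1)" unfolding MLin_def
    using mat_of_rows_carrier(1)[of "n + 1" "map (\<lambda>i. phiL n (y i)) [0..<p + 1]"] by simp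

lemma sol_ex:
  assumes poised: "mfn_poised n p y"
  shows "\<exists>lam. mfn_solution n p y x lam"
proof -
  have d: "det (four_block_mat (MQ n p y * transpose_mat (MQ n p y)) (MLin n p y) (transpose_mat (MLin n p y)) (0\<^sub>m (n + 1) (n + 1))) \<noteq> 0"
    using poised unfolding mfn_poised_def .
  obtain lam where "lam \<in> carrier_vec (p + 1)" "transpose_mat (MLin n p y) *\<^sub>v lam = phiL n x"
     "\<forall>mu \<in> carrier_vec (p + 1). transpose_mat (MLin n p y) *\<^sub>v mu = phiL n x \<longrightarrow>
        (vnorm (transpose_mat (MQ n p y) *\<^sub>v lam - phiQ n x))\<^sup>2 \<le> (vnorm (transpose_mat (MQ n p y) *\<^sub>v mu - phiQ n x))\<^sup>2"
    using kkt[OF MQc MLc f g d] by blast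
  then have "mfn_solution n p y x lam" unfolding mfn_solution_def by (auto simp: divide_right_mono)
  then show ?thesis by blast
qed

theorem theorem4:
  fixes n p q :: nat and \<delta> \<Lambda> :: real and y :: "nat \<Rightarrow> real vec"
  assumes "q = (n\<^sup>2 + 3 * n) div 2"
    and "n < p" and "p < q"
    and "\<delta> > 0" and "\<Lambda> > 0"
    and "\<forall>i \<le> p. y i \<in> carrier_vec n"
    and "mfn_Lambda_poised n p y \<Lambda> (cball_vec n (y 0) \<delta>)"
  shows "opnorm (pinv ((1 / \<delta>) \<cdot>\<^sub>m Ls n p y)) \<le> \<Lambda> * sqrt (2 * (real n + 1)) * real (p + 1)"
proof -
  note dpos = assms(4) and Lpos = assms(5) and ycar = assms(6)
  have poised: "mfn_poised n p y" and Lp: "\<And>x lam. x \<in> cball_vec n (y 0) \<delta> \<Longrightarrow> mfn_solution n p y x lam \<Longrightarrow> vnorm_inf lam \<le> \<Lambda>"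
    using assms(7) unfolding mfn_Lambda_poised_def by auto
  have MQc: "MQ n p y \<in> carrier_mat (p + 1) (n * (n + 1) div 2)" unfolding MQ_def
    using mat_of_rows_carrier(1)[of "n * (n + 1) div 2" "map (\<lambda>i. phiQ n (y i)) [0..<p + 1]"] by simp
  have MLc: "MLin n p y \<in> carrier_mat (p + 1) (n + 1)" unfolding MLin_def
    using mat_of_rows_carrier(1)[of "n + 1" "map (\<lambda>i. phiL n (y i)) [0..<p + 1]"] by simp
  have sol: "\<exists>lam. mfn_solution n p y x lam" for x using sol_ex[OF poised] .
  define c where "c = sqrt p * \<Lambda>"
  define Ah where "Ah = (1 / \<delta>) \<cdot>\<^sub>m Ls n p y"
  have Lsc: "Ls n p y \<in> carrier_mat p n" unfolding Ls_def by simp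
  have Ahc: "Ah \<in> carrier_mat p n" unfolding Ah_def using Lsc by simp
  have c0: "c \<ge> 0" unfolding c_def using Lpos by simp
  have key: "\<forall>z \<in> carrier_vec n. vnorm z \<le> c * vnorm (Ah *\<^sub>v z)"
  proof
    fix z :: "real vec" assume z: "z \<in> carrier_vec n"
    show "vnorm z \<le> c * vnorm (Ah *\<^sub>v z)"
    proof (cases "vnorm z = 0")
      case True
      then show ?thesis using c0 vnorm_ge0[of "Ah *\<^sub>v z"] by simp
    next
      case False
      then have nz: "vnorm z > 0" using vnorm_ge0[of z] by simp
      define t where "t = \<delta> / vnorm z"
      have tpos: "t > 0" unfolding t_def using nz dpos by simp
      define x where "x = y 0 + t \<cdot>\<^sub>v z"
      have y0: "y 0 \<in> carrier_vec n" using ycar by simp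
      have xc: "x \<in> carrier_vec n" unfolding x_def using y0 z by simp
      have xy: "x - y 0 = t \<cdot>\<^sub>v z" unfolding x_def using y0 z by (intro eq_vecI) auto
      have "vnorm (x - y 0) = \<delta>" unfolding xy vnorm_smult t_def using nz tpos t_def dpos by simp
      then have xb: "x \<in> cball_vec n (y 0) \<delta>" unfolding cball_vec_def using xc by simp
      obtain lam where ls: "mfn_solution n p y x lam" using sol by blast
      have lamc: "lam \<in> carrier_vec (p + 1)" and eq: "transpose_mat (MLin n p y) *\<^sub>v lam = phiL n x"
        using ls unfolding mfn_solution_def by auto
      have linf: "vnorm_inf lam \<le> \<Lambda>" using Lp[OF xb ls] .
      have lb: "\<bar>lam $ i\<bar> \<le> \<Lambda>" if i: "i < p + 1" for i
      proof -
        have "\<bar>lam $ i\<bar> \<le> vnorm_inf lam" unfolding vnorm_inf_def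
          using i lamc by (intro Max_ge) auto
        then show ?thesis using linf by simp
      qed
      have F0: "(\<Sum>i<p+1. lam $ i) = 1"
        using arg_cong[OF eq, of "\<lambda>v. v $ 0"] MLin_col[of 0 n lam p y] lamc by (simp add: phiL_def)
      have Fk: "(\<Sum>i<p+1. y i $ k * lam $ i) = x $ k" if k: "k < n" for k
        using arg_cong[OF eq, of "\<lambda>v. v $ (k + 1)"] MLin_col[of "k + 1" n lam p y] lamc k
        by (simp add: phiL_def)
      define lam' where "lam' = vec p (\<lambda>i. lam $ (i + 1))"
      have lam'c: "lam' \<in> carrier_vec p" unfolding lam'_def by simp
      have nlam': "vnorm lam' \<le> c" unfolding c_def
        using vnorm_bound[of lam' \<Lambda>] lb unfolding lam'_def by simp
      have LT: "transpose_mat (Ls n p y) *\<^sub>v lam' = t \<cdot>\<^sub>v z"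
      proof (intro eq_vecI)
        fix k assume "k < dim_vec (t \<cdot>\<^sub>v z)"
        then have k: "k < n" using z by simp
        have "(transpose_mat (Ls n p y) *\<^sub>v lam') $ k = (\<Sum>i<p. (y (i + 1) $ k - y 0 $ k) * lam $ (i + 1))"
          unfolding lam'_def using LsT_idx[OF k, of p y "\<lambda>i. lam $ (i + 1)"] by simp
        also have "\<dots> = (\<Sum>i<p. y (i + 1) $ k * lam $ (i + 1)) - y 0 $ k * (\<Sum>i<p. lam $ (i + 1))"
          by (rule sum_split_lin)
        also have "(\<Sum>i<p. y (i + 1) $ k * lam $ (i + 1)) = x $ k - y 0 $ k * lam $ 0"
          using Fk[OF k] by (simp add: sum.lessThan_Suc_shift del: sum.lessThan_Suc)
        also have "(\<Sum>i<p. lam $ (i + 1)) = 1 - lam $ 0"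
          using F0 by (simp add: sum.lessThan_Suc_shift del: sum.lessThan_Suc)
        finally have "(transpose_mat (Ls n p y) *\<^sub>v lam') $ k = x $ k - y 0 $ k"
          by (simp add: algebra_simps)
        also have "\<dots> = (x - y 0) $ k" using k y0 by simp
        finally show "(transpose_mat (Ls n p y) *\<^sub>v lam') $ k = (t \<cdot>\<^sub>v z) $ k" unfolding xy .
      qed (use z Lsc in simp)
      have Lsz: "Ls n p y *\<^sub>v z = \<delta> \<cdot>\<^sub>v (Ah *\<^sub>v z)"
        unfolding Ah_def using smult_mv[OF Lsc z] dpos by simp
      have "t * (z \<bullet> z) = (t \<cdot>\<^sub>v z) \<bullet> z" using z by simp
      also have "\<dots> = lam' \<bullet> (Ls n p y *\<^sub>v z)" unfolding LT[symmetric]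
        by (rule transpose_vec_mult_scalar[OF Lsc z lam'c])
      also have "\<dots> \<le> vnorm lam' * vnorm (Ls n p y *\<^sub>v z)"
        using cauchy_schwarz Lsc lam'c z by simp
      also have "\<dots> \<le> c * vnorm (Ls n p y *\<^sub>v z)"
        using nlam' vnorm_ge0 by (simp add: mult_right_mono)
      also have "vnorm (Ls n p y *\<^sub>v z) = \<delta> * vnorm (Ah *\<^sub>v z)" unfolding Lsz vnorm_smult using dpos by simp
      finally have "t * (z \<bullet> z) \<le> c * (\<delta> * vnorm (Ah *\<^sub>v z))" .
      moreover have "t * (z \<bullet> z) = \<delta> * vnorm z" unfolding t_def vnorm_sq[symmetric] using nz
        by (simp add: power2_eq_square)
      ultimately have "\<delta> * vnorm z \<le> \<delta> * (c * vnorm (Ah *\<^sub>v z))" by (simp add: algebra_simps)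
      then show ?thesis using dpos by simp
    qed
  qed
  have "opnorm (pinv Ah) \<le> c" by (rule pinv_bound[OF Ahc c0 key])
  also have "c \<le> \<Lambda> * sqrt (2 * (real n + 1)) * real (p + 1)" unfolding c_def using fin_arith[OF Lpos] .
  finally show ?thesis unfolding Ah_def .
qed

end
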